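(* Let $\mathbf{f}^{(1)},\mathbf{f}^{(2)}:\mathbb{R}^d\to\mathbb{R}^d$ be Lipschitz with constants $L_1,L_2>0$, with $\sup_{\mathbf{x}\in\mathbb{R}^d}\|\mathbf{f}^{(1)}(\mathbf{x})-\mathbf{f}^{(2)}(\mathbf{x})\|\le\mu$. Let $J\ge2$, $T_2>0$, $\Delta=T_2/(J-1)$, $t_j=(j-1)\Delta$, and let $0<T_1\le\breve t<T_2$ with $\breve t=t_m$ a grid point and $|\breve t-T_1|\le\eta$ ($\mu,\eta>0$). Let $\mathbf{x}(t)$ solve the switched system with initial state $\mathbf{x}_0$. Let $\widehat{\mathbf{y}}(t_1)=\mathbf{x}_0$, $\widehat{\mathbf{y}}(t_j)=\mathcal{N}_j(\widehat{\mathbf{y}}(t_{j-1}))$ for $j=2,\dots,J$, where the maps $\mathcal{N}_j:\mathbb{R}^d\to\mathbb{R}^d$ satisfy, for some $\varepsilon\ge0$ and all $j=2,\dots,J$, $\|\mathcal{N}_j(\widehat{\mathbf{y}}(t_{j-1}))-\Phi^{(k_j)}_\Delta(\widehat{\mathbf{y}}(t_{j-1}))\|\le\varepsilon$ with $k_j=1$ if $t_j\le\breve t$ and $k_j=2$ if $t_j>\breve t$. Then for $j=2,\dots,J$, $$\|\widehat{\mathbf{y}}(t_j)-\mathbf{x}(t_j)\|\le\begin{cases}\dfrac{1-\exp(L_1t_j)}{1-\exp(L_1\Delta)}\varepsilon, & t_j\in(0,T_1],\\[2mm] \mu(t_j-T_1)\exp\big(\max(L_1,L_2)(t_j-T_1)\big)+\dfrac{1-\exp(L_1t_j)}{1-\exp(L_1\Delta)}\varepsilon,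 & t_j\in(T_1,\breve t],\\[2mm] \mu\eta\exp\big(L_2(t_j-\breve t)+\max(L_1,L_2)\eta\big)+\dfrac{1-\exp(L_2(t_j-\breve t))}{1-\exp(L_2\Delta)}\varepsilon+\exp\big(L_2(t_j-\breve t)\big)\dfrac{1-\exp(L_1\breve t)}{1-\exp(L_1\Delta)}\varepsilon, & t_j\in(\breve t,T_2].\end{cases}$$
   Context: $\|\cdot\|$ is the Euclidean norm. The switched system is $\frac{d}{dt}\mathbf{x}(t)=\mathbf{f}^{(\sigma(t))}(\mathbf{x}(t))$, $\mathbf{x}(0)=\mathbf{x}_0$, with $\sigma(t)=1$ for $t\in(0,T_1]$ and $\sigma(t)=2$ for $t\in(T_1,T_2]$; $T_1$ is the (unknown) switching time and $\breve t$ is its approximation identified by the paper's adaptive algorithm. For $k=1,2$, $\Phi^{(k)}_\Delta(\mathbf{z})$ denotes the state at time $\Delta$ of the solution of $\frac{d}{dt}\mathbf{z}=\mathbf{f}^{(k)}(\mathbf{z})$ started at $\mathbf{z}$ (the $\Delta$-lag flow map). The maps $\mathcal{N}_j$ are the trained local neural networks used to predict one time step; the accuracy hypothesis encodes that networks used for steps up to $\breve t$ approximate $\Phi^{(1)}_\Delta$ and those after approximate $\Phi^{(2)}_\Delta$ within $\varepsilon$ at the predicted states. *)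

theory Defs
  imports "HOL-Analysis.Analysis"
begin

text \<open>The Delta-lag flow map of the autonomous ODE z' = f z: the state at time Delta
  of the solution started at z (unique for globally Lipschitz f).\<close>
definition flow_map :: "('a::euclidean_space \<Rightarrow> 'a) \<Rightarrow> real \<Rightarrow> 'a \<Rightarrow> 'a" where
  "flow_map f \<Delta> z = (THE w. \<exists>u. u 0 = z \<and> u \<Delta> = w \<and>
      (\<forall>t\<in>{0..\<Delta>}. (u has_vector_derivative f (u t)) (at t within {0..\<Delta>})))"

definition switched_solution ::
  "('a::euclidean_space \<Rightarrow> 'a) \<Rightarrow> ('a \<Rightarrow> 'a) \<Rightarrow> real \<Rightarrow> real \<Rightarrow> 'a \<Rightarrow> (real \<Rightarrow> 'a) \<Rightarrow> bool" where
  "switched_solution f1 f2 T1 T2 x0 x \<longleftrightarrow>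
     x 0 = x0 \<and> continuous_on {0..T2} x \<and>
     (\<forall>t\<in>{0..T1}. (x has_vector_derivative f1 (x t)) (at t within {0..T1})) \<and>
     (\<forall>t\<in>{T1..T2}. (x has_vector_derivative f2 (x t)) (at t within {T1..T2}))"

end

theory Submission
  imports Defs
begin


lemma gronwall_vec:
  fixes v :: "real \<Rightarrow> 'a::euclidean_space"
  assumes ab: "a \<le> b" and L: "L > 0" and c: "c \<ge> 0"
  and der: "\<And>s. s\<in>{a..b} \<Longrightarrow> (v has_vector_derivative v' s) (at s within {a..b})"
  and bnd: "\<And>s. s\<in>{a..b} \<Longrightarrow> norm (v' s) \<le> L * norm (v s) + c"
  shows "norm (v b) + c/L \<le> (norm (v a) + c/L) * exp (L*(b-a))"
proof -
  have contv: "continuous_on {a..b} v"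
    using der has_vector_derivative_continuous continuous_on_eq_continuous_within by blast
  define g where "g = (\<lambda>s. L * norm (v s) + c)"
  have contg: "continuous_on {a..b} g" unfolding g_def
    by (intro continuous_intros contv)
  define A where "A = norm (v a)"
  have step1: "norm (v s) \<le> A + integral {a..s} g" if s: "s \<in> {a..b}" for s
  proof -
    have sub: "{a..s} \<subseteq> {a..b}" using s by auto
    have "(v' has_integral v s - v a) {a..s}"
      apply (rule fundamental_theorem_of_calculus)
      using s apply simp
      using der sub has_vector_derivative_within_subset by (metis subsetD)
    then have "norm (v s - v a) \<le> integral {a..s} g"
      apply (subst integral_unique[symmetric], assumption)
      apply (rule integral_norm_bound_integral)
        apply (blast intro: has_integral_integrable)
       apply (rule integrable_continuous_interval)
       apply (rule continuous_on_subset[OF contg sub])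
      using bnd sub g_def by auto
    moreover have "norm (v s) \<le> norm (v a) + norm (v s - v a)"
      by (metis add.commute diff_add_cancel norm_triangle_ineq)
    ultimately show ?thesis unfolding A_def by linarith
  qed
  define K where "K = (\<lambda>s. A + integral {a..s} g + c/L)"
  define P where "P = (\<lambda>s. exp (-L*(s-a)) * K s)"
  define P' where "P' = (\<lambda>s. exp (-L*(s-a)) * (g s - L * K s))"
  have derP: "(P has_real_derivative P' s) (at s within {a..b})" if s: "s \<in> {a..b}" for s
  proof -
    have d1: "((\<lambda>s. integral {a..s} g) has_real_derivative g s) (at s within {a..b})"
      by (rule integral_has_real_derivative[OF contg s])
    have dK: "(K has_real_derivative g s) (at s within {a..b})"
      unfolding K_def using d1 by (auto intro!: derivative_eq_intros)
    have de: "((\<lambda>s. exp (-L*(s-a))) has_real_derivative exp (-L*(s-a)) * (-L)) (at s within {a..b})"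
      by (auto intro!: derivative_eq_intros)
    show ?thesis unfolding P_def P'_def
      using DERIV_mult[OF de dK] by (simp add: algebra_simps)
  qed
  have "(P' has_integral P b - P a) {a..b}"
    apply (rule fundamental_theorem_of_calculus[OF ab])
    using derP has_real_derivative_iff_has_vector_derivative by blast
  moreover have "P' s \<le> 0" if "s \<in> {a..b}" for s
  proof -
    have "g s - L * K s = L * (norm (v s) - A - integral {a..s} g)"
      unfolding g_def K_def using L by (simp add: algebra_simps)
    also have "\<dots> \<le> 0" using step1[OF that] L by (simp add: mult_nonneg_nonpos)
    finally show ?thesis unfolding P'_def by (simp add: mult_nonneg_nonpos)
  qed
  ultimately have "P b - P a \<le> 0"
    using has_integral_le[of P' _ "{a..b}" "\<lambda>_. 0" 0] has_integral_0 by blast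
  moreover have "P a = A + c/L" unfolding P_def K_def by simp
  ultimately have "exp (-L*(b-a)) * K b \<le> A + c/L" unfolding P_def by simp
  then have "exp (-L*(b-a)) * K b * exp (L*(b-a)) \<le> (A + c/L) * exp (L*(b-a))"
    by (simp add: mult_right_mono)
  moreover have "exp (-L*(b-a)) * K b * exp (L*(b-a)) = K b"
    by (simp add: mult.commute mult.left_commute flip: exp_add)
  ultimately have "K b \<le> (A + c/L) * exp (L*(b-a))"
    by (metis exp_minus_inverse mult.commute mult_1 mult.assoc)
  moreover have "norm (v b) + c/L \<le> K b" using step1[of b] ab unfolding K_def by auto
  ultimately show ?thesis unfolding A_def by linarith
qed



fun pic :: "('a::euclidean_space \<Rightarrow> 'a) \<Rightarrow> 'a \<Rightarrow> nat \<Rightarrow> real \<Rightarrow> 'a" where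
  "pic f z 0 t = z"
| "pic f z (Suc n) t = z + integral {0..t} (\<lambda>s. f (pic f z n s))"

lemma exp_integral_aux:
  fixes L t :: real
  assumes "L > 0" "t \<ge> 0"
  shows "((\<lambda>s. L * exp (2 * L * s)) has_integral ((exp (2 * L * t) - 1)/2)) {0..t}"
proof -
  have "((\<lambda>s. L * exp (2 * L * s)) has_integral (exp (2 * L * t)/2 - exp (2 * L * 0)/2)) {0..t}"
    apply (rule fundamental_theorem_of_calculus)
    using assms apply simp
    apply (rule has_real_derivative_iff_has_vector_derivative[THEN iffD1])
    apply (rule derivative_eq_intros refl | simp)+
    done
  then show ?thesis by (simp add: diff_divide_distrib)
qed

lemma picard_exists:
  fixes f :: "'a::euclidean_space \<Rightarrow> 'a"
  assumes lip: "L-lipschitz_on UNIV f" and L: "L > 0" and D: "D \<ge> 0"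
  shows "\<exists>u. u 0 = z \<and> (\<forall>t\<in>{0..D}. (u has_vector_derivative f (u t)) (at t within {0..D}))"
proof -
  have fc: "continuous_on UNIV f" using lipschitz_on_continuous_on[OF lip] .
  have lipn: "norm (f a - f b) \<le> L * norm (a - b)" for a b
    using lipschitz_on_normD[OF lip] by auto
  have fcomp: "continuous_on {0..D} (\<lambda>s. f (g s))" if "continuous_on {0..D} g" for g
    using continuous_on_compose2[OF fc that] by auto
  have intcont: "continuous_on {0..D} (\<lambda>t. integral {0..t} h)" if "continuous_on {0..D} h" for h :: "real \<Rightarrow> 'a"
    unfolding continuous_on_eq_continuous_within
    using integral_has_vector_derivative[OF that] has_vector_derivative_continuous by blast
  have cont: "continuous_on {0..D} (pic f z n)" for n
  proof (induction n)
    case 0 then show ?case by simp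
  next
    case (Suc n)
    have "continuous_on {0..D} (\<lambda>t. z + integral {0..t} (\<lambda>s. f (pic f z n s)))"
      by (intro continuous_intros intcont fcomp Suc)
    then show ?case by simp
  qed
  have intb: "(\<lambda>s. f (pic f z n s)) integrable_on {0..t}" if "t \<in> {0..D}" for n t
    apply (rule integrable_continuous_interval)
    apply (rule continuous_on_subset[OF fcomp[OF cont]])
    using that by auto
  define C where "C = D * norm (f z)"
  have Cnn: "C \<ge> 0" unfolding C_def using D by simp
  have bnd: "\<forall>t\<in>{0..D}. norm (pic f z (Suc n) t - pic f z n t) \<le> C * exp (2 * L * t) / 2^n" for n
  proof (induction n)
    case 0
    show ?case
    proof
      fix t assume t: "t \<in> {0..D}"
      have "norm (pic f z (Suc 0) t - pic f z 0 t) = t * norm (f z)" using t by simp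
      also have "\<dots> \<le> C" unfolding C_def using t by (simp add: mult_right_mono)
      also have "\<dots> \<le> C * exp (2 * L * t)"
        using Cnn t L mult_left_mono[of 1 "exp (2 * L * t)" C] by simp
      finally show "norm (pic f z (Suc 0) t - pic f z 0 t) \<le> C * exp (2 * L * t) / 2^0" by simp
    qed
  next
    case (Suc n)
    show ?case
    proof
      fix t assume t: "t \<in> {0..D}"
      have sub: "{0..t} \<subseteq> {0..D}" using t by auto
      have "pic f z (Suc (Suc n)) t - pic f z (Suc n) t
          = integral {0..t} (\<lambda>s. f (pic f z (Suc n) s) - f (pic f z n s))"
        using integral_diff[OF intb[OF t, of "Suc n"] intb[OF t, of n]] by simp
      also have "norm \<dots> \<le> integral {0..t} (\<lambda>s. (C / 2^n) * (L * exp (2 * L * s)))"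
      proof (rule integral_norm_bound_integral)
        show "(\<lambda>s. f (pic f z (Suc n) s) - f (pic f z n s)) integrable_on {0..t}"
          by (intro integrable_diff intb t)
        show "(\<lambda>s. C / 2 ^ n * (L * exp (2 * L * s))) integrable_on {0..t}"
        proof -
          have "(\<lambda>s. L * exp (2 * L * s)) integrable_on {0..t}"
            using exp_integral_aux[OF L, of t] t by (auto dest: has_integral_integrable)
          from integrable_cmul[OF this, of "C / 2 ^ n"] show ?thesis
            unfolding real_scaleR_def .
        qed
        fix s assume s: "s \<in> {0..t}"
        have "norm (f (pic f z (Suc n) s) - f (pic f z n s)) \<le> L * norm (pic f z (Suc n) s - pic f z n s)"
          by (rule lipn)
        also have "\<dots> \<le> L * (C * exp (2 * L * s) / 2^n)"
          using Suc.IH s sub L by (intro mult_left_mono) auto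
        finally show "norm (f (pic f z (Suc n) s) - f (pic f z n s)) \<le> C / 2 ^ n * (L * exp (2 * L * s))"
          by (simp add: field_simps)
      qed
      also have "\<dots> = (C / 2^n) * ((exp (2 * L * t) - 1)/2)"
      proof -
        have I: "integral {0..t} (\<lambda>s. L * exp (2 * L * s)) = (exp (2 * L * t) - 1)/2"
          using integral_unique[OF exp_integral_aux[OF L, of t]] t by simp
        have "integral {0..t} (\<lambda>s. C / 2^n * (L * exp (2 * L * s))) = C / 2^n * integral {0..t} (\<lambda>s. L * exp (2 * L * s))"
          by (rule integral_mult_right)
        with I show ?thesis by (simp only:)
      qed
      also have "\<dots> \<le> C * exp (2 * L * t) / 2^(Suc n)"
        using Cnn by (simp add: field_simps)
      finally show "norm (pic f z (Suc (Suc n)) t - pic f z (Suc n) t) \<le> C * exp (2 * L * t) / 2^(Suc n)" .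
    qed
  qed
  define B where "B = C * exp (2 * L * D)"
  have bnd2: "norm (pic f z (Suc n) t - pic f z n t) \<le> B / 2^n" if t: "t \<in> {0..D}" for n t
  proof -
    have "C * exp (2 * L * t) \<le> B" unfolding B_def using t L Cnn by (intro mult_left_mono) auto
    then show ?thesis using bnd[of n] t by (meson divide_right_mono order_trans zero_le_power zero_le_numeral)
  qed
  have cauchy: "norm (pic f z (n+k) t - pic f z n t) \<le> 2*B*(1/2^n - 1/2^(n+k))" if t: "t \<in> {0..D}" for n k t
  proof (induction k)
    case 0 then show ?case by simp
  next
    case (Suc k)
    have "norm (pic f z (n + Suc k) t - pic f z n t)
        \<le> norm (pic f z (Suc (n+k)) t - pic f z (n+k) t) + norm (pic f z (n+k) t - pic f z n t)"
      using norm_triangle_ineq[of "pic f z (Suc (n+k)) t - pic f z (n+k) t" "pic f z (n+k) t - pic f z n t"]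
      by simp
    also have "\<dots> \<le> B/2^(n+k) + 2*B*(1/2^n - 1/2^(n+k))"
      using bnd2[OF t, of "n+k"] Suc.IH by linarith
    also have "\<dots> = 2*B*(1/2^n - 1/2^(n + Suc k))" by (simp add: field_simps)
    finally show ?case .
  qed
  define d where "d = (\<lambda>t k. pic f z (Suc k) t - pic f z k t)"
  define u where "u = (\<lambda>t. z + suminf (d t))"
  have conv: "(\<lambda>n. pic f z n t) \<longlonglongrightarrow> u t" if t: "t \<in> {0..D}" for t
  proof -
    have "summable (d t)"
    proof (rule summable_comparison_test)
      show "\<exists>N. \<forall>n\<ge>N. norm (d t n) \<le> B * (1/2)^n"
        using bnd2[OF t] unfolding d_def by (auto simp: power_one_over)
      show "summable (\<lambda>n. B * (1/2::real)^n)" by (intro summable_mult summable_geometric) simp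
    qed
    then have "(\<lambda>n. z + (\<Sum>k<n. d t k)) \<longlonglongrightarrow> u t"
      unfolding u_def by (intro tendsto_intros summable_LIMSEQ)
    moreover have "z + (\<Sum>k<n. d t k) = pic f z n t" for n
      unfolding d_def by (subst sum_lessThan_telescope) simp
    ultimately show ?thesis by simp
  qed
  have tail: "norm (u t - pic f z n t) \<le> 2*B/2^n" if t: "t \<in> {0..D}" for n t
  proof (rule Lim_norm_ubound)
    show "\<not> trivial_limit sequentially" by simp
    show "((\<lambda>m. pic f z m t - pic f z n t) \<longlongrightarrow> u t - pic f z n t) sequentially"
      by (intro tendsto_intros conv t)
    show "\<forall>\<^sub>F m in sequentially. norm (pic f z m t - pic f z n t) \<le> 2 * B / 2 ^ n"
      unfolding eventually_sequentially
    proof (intro exI allI impI)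
      fix m assume "n \<le> m"
      then obtain k where m: "m = n + k" using le_Suc_ex by blast
      have "2*B*(1/2^n - 1/2^(n+k)) \<le> 2*B/2^n" using Cnn L unfolding B_def by (simp add: field_simps)
      then show "norm (pic f z m t - pic f z n t) \<le> 2 * B / 2 ^ n"
        using cauchy[OF t, of n k] unfolding m by linarith
    qed
  qed
  have lim0: "(\<lambda>n. 2*B/2^n) \<longlonglongrightarrow> 0"
  proof -
    have "(\<lambda>n. 2*B*(1/2::real)^n) \<longlonglongrightarrow> 2*B*0"
      by (intro tendsto_intros LIMSEQ_realpow_zero) auto
    then show ?thesis by (simp add: power_one_over)
  qed
  have ucont: "continuous_on {0..D} u"
  proof (rule uniform_limit_theorem)
    show "\<forall>\<^sub>F n in sequentially. continuous_on {0..D} (pic f z n)" using cont by simp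
    show "uniform_limit {0..D} (pic f z) u sequentially"
      unfolding uniform_limit_sequentially_iff
    proof (intro allI impI)
      fix e :: real assume e: "e > 0"
      from order_tendstoD(2)[OF lim0 e] obtain N where N: "\<forall>n\<ge>N. 2*B/2^n < e"
        unfolding eventually_sequentially by blast
      show "\<exists>N. \<forall>n\<ge>N. \<forall>x\<in>{0..D}. dist (pic f z n x) (u x) < e"
        using N tail by (metis dist_commute dist_norm le_less_trans)
    qed
  qed auto
  have inteq: "u t = z + integral {0..t} (\<lambda>s. f (u s))" if t: "t \<in> {0..D}" for t
  proof -
    have sub: "{0..t} \<subseteq> {0..D}" using t by auto
    have ui: "(\<lambda>s. f (u s)) integrable_on {0..t}"
      by (rule integrable_continuous_interval, rule continuous_on_subset[OF fcomp[OF ucont] sub])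
    have "(\<lambda>n. integral {0..t} (\<lambda>s. f (pic f z n s)) - integral {0..t} (\<lambda>s. f (u s))) \<longlonglongrightarrow> 0"
    proof (rule Lim_null_comparison)
      show "(\<lambda>n. t * (L * (2*B/2^n))) \<longlonglongrightarrow> 0"
        using tendsto_mult_right_zero[OF tendsto_mult_right_zero[OF lim0]] by simp
      show "\<forall>\<^sub>F n in sequentially. norm (integral {0..t} (\<lambda>s. f (pic f z n s)) - integral {0..t} (\<lambda>s. f (u s))) \<le> t * (L * (2*B/2^n))"
      proof (intro always_eventually allI)
        fix n
        have "integral {0..t} (\<lambda>s. f (pic f z n s)) - integral {0..t} (\<lambda>s. f (u s))
            = integral {0..t} (\<lambda>s. f (pic f z n s) - f (u s))"
          using integral_diff[OF intb[OF t] ui] by simp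
        also have "norm \<dots> \<le> integral {0..t} (\<lambda>s. L * (2*B/2^n))"
        proof (rule integral_norm_bound_integral)
          show "(\<lambda>s. f (pic f z n s) - f (u s)) integrable_on {0..t}" by (intro integrable_diff intb ui t)
          show "(\<lambda>s. L * (2*B/2^n)) integrable_on {0..t}" by (rule integrable_const_ivl)
          fix s assume s: "s \<in> {0..t}"
          have "norm (f (pic f z n s) - f (u s)) \<le> L * norm (pic f z n s - u s)" by (rule lipn)
          also have "\<dots> \<le> L * (2*B/2^n)"
            using tail[of s n] s sub L by (intro mult_left_mono) (auto simp: norm_minus_commute)
          finally show "norm (f (pic f z n s) - f (u s)) \<le> L * (2*B/2^n)" .
        qed
        also have "\<dots> = t * (L * (2*B/2^n))" using t by simp
        finally show "norm (integral {0..t} (\<lambda>s. f (pic f z n s)) - integral {0..t} (\<lambda>s. f (u s))) \<le> t * (L * (2*B/2^n))" .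
      qed
    qed
    then have "(\<lambda>n. integral {0..t} (\<lambda>s. f (pic f z n s))) \<longlonglongrightarrow> integral {0..t} (\<lambda>s. f (u s))"
      by (rule LIM_zero_cancel)
    then have "(\<lambda>n. pic f z (Suc n) t) \<longlonglongrightarrow> z + integral {0..t} (\<lambda>s. f (u s))"
      by (simp add: tendsto_add_const_iff)
    moreover have "(\<lambda>n. pic f z (Suc n) t) \<longlonglongrightarrow> u t"
      using LIMSEQ_Suc[OF conv[OF t]] .
    ultimately show ?thesis using LIMSEQ_unique by blast
  qed
  show ?thesis
  proof (intro exI conjI ballI)
    show "u 0 = z" using inteq[of 0] D by simp
    fix t assume t: "t \<in> {0..D}"
    have "((\<lambda>t. z + integral {0..t} (\<lambda>s. f (u s))) has_vector_derivative (0 + f (u t))) (at t within {0..D})"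
      by (intro derivative_intros integral_has_vector_derivative fcomp ucont t)
    then have "((\<lambda>t. z + integral {0..t} (\<lambda>s. f (u s))) has_vector_derivative f (u t)) (at t within {0..D})"
      by simp
    then show "(u has_vector_derivative f (u t)) (at t within {0..D})"
      using has_vector_derivative_transform[OF t, of u "\<lambda>t. z + integral {0..t} (\<lambda>s. f (u s))"] inteq
      by blast
  qed
qed



lemma sol_stab:
  fixes f :: "'a::euclidean_space \<Rightarrow> 'a"
  assumes lip: "L-lipschitz_on UNIV f" and L: "L > 0" and ab: "a \<le> b"
    and d1: "\<forall>s\<in>{a..b}. (u1 has_vector_derivative f (u1 s)) (at s within {a..b})"
    and d2: "\<forall>s\<in>{a..b}. (u2 has_vector_derivative f (u2 s)) (at s within {a..b})"
  shows "norm (u1 b - u2 b) \<le> exp (L*(b-a)) * norm (u1 a - u2 a)"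
proof -
  have "norm ((\<lambda>s. u1 s - u2 s) b) + 0/L \<le> (norm ((\<lambda>s. u1 s - u2 s) a) + 0/L) * exp (L*(b-a))"
  proof (rule gronwall_vec[OF ab L order_refl])
    fix s assume s: "s \<in> {a..b}"
    show "((\<lambda>s. u1 s - u2 s) has_vector_derivative f (u1 s) - f (u2 s)) (at s within {a..b})"
      using d1 d2 s by (intro derivative_intros) auto
    show "norm (f (u1 s) - f (u2 s)) \<le> L * norm (u1 s - u2 s) + 0"
      using lipschitz_on_normD[OF lip] by simp
  qed
  then show ?thesis by (simp add: mult.commute)
qed

lemma flow_char:
  fixes f :: "'a::euclidean_space \<Rightarrow> 'a"
  assumes lip: "L-lipschitz_on UNIV f" and L: "L > 0" and D: "D \<ge> 0"
    and u0: "u 0 = z" and du: "\<forall>t\<in>{0..D}. (u has_vector_derivative f (u t)) (at t within {0..D})"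
  shows "flow_map f D z = u D"
  unfolding flow_map_def
proof (rule the_equality)
  show "\<exists>u'. u' 0 = z \<and> u' D = u D \<and> (\<forall>t\<in>{0..D}. (u' has_vector_derivative f (u' t)) (at t within {0..D}))"
    using u0 du by blast
  fix w assume "\<exists>u'. u' 0 = z \<and> u' D = w \<and> (\<forall>t\<in>{0..D}. (u' has_vector_derivative f (u' t)) (at t within {0..D}))"
  then obtain u' where u': "u' 0 = z" "u' D = w" "\<forall>t\<in>{0..D}. (u' has_vector_derivative f (u' t)) (at t within {0..D})"
    by blast
  have "norm (u' D - u D) \<le> exp (L*(D-0)) * norm (u' 0 - u 0)"
    by (rule sol_stab[OF lip L D u'(3) du])
  then show "w = u D" using u' u0 by simp
qed

lemma flow_bound:
  fixes f :: "'a::euclidean_space \<Rightarrow> 'a"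
  assumes lip: "L-lipschitz_on UNIV f" and L: "L > 0" and D: "D \<ge> 0"
    and dw: "\<forall>s\<in>{a..a+D}. (w has_vector_derivative f (w s)) (at s within {a..a+D})"
  shows "norm (flow_map f D y - w (a+D)) \<le> exp (L*D) * norm (y - w a)"
proof -
  obtain u where u: "u 0 = y" "\<forall>t\<in>{0..D}. (u has_vector_derivative f (u t)) (at t within {0..D})"
    using picard_exists[OF lip L D] by blast
  have fl: "flow_map f D y = u D" by (rule flow_char[OF lip L D u])
  have dw': "\<forall>s\<in>{0..D}. ((\<lambda>s. w (a+s)) has_vector_derivative f (w (a+s))) (at s within {0..D})"
  proof
    fix s assume s: "s \<in> {0..D}"
    have i: "(\<lambda>s. a + s) ` {0..D} = {a..a+D}" by simp
    have "((\<lambda>s. a + s) has_vector_derivative 1) (at s within {0..D})"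
      by (auto intro!: derivative_eq_intros)
    moreover have "(w has_vector_derivative f (w (a+s))) (at (a+s) within (\<lambda>s. a + s) ` {0..D})"
      unfolding i using dw s by auto
    ultimately have "((w \<circ> (\<lambda>s. a + s)) has_vector_derivative (1 *\<^sub>R f (w (a+s)))) (at s within {0..D})"
      by (rule vector_diff_chain_within)
    then show "((\<lambda>s. w (a+s)) has_vector_derivative f (w (a+s))) (at s within {0..D})"
      by (simp add: o_def)
  qed
  have "norm (u D - w (a+D)) \<le> exp (L*(D-0)) * norm (u 0 - w (a+0))"
    by (rule sol_stab[OF lip L D u(2) dw'])
  then show ?thesis using fl u by simp
qed



lemma exp_minus_one_le: "(x::real) \<ge> 0 \<Longrightarrow> exp x - 1 \<le> x * exp x"
proof -
  assume x: "x \<ge> 0"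
  have "1 + (-x) \<le> exp (-x)" by (rule exp_ge_add_one_self)
  then have "exp x * (1 - x) \<le> exp x * exp (-x)" by (intro mult_left_mono) auto
  then show ?thesis by (simp add: exp_minus algebra_simps)
qed

theorem mainTheorem5:
  fixes f1 f2 :: "'a::euclidean_space \<Rightarrow> 'a"
    and L1 L2 \<mu> \<eta> \<epsilon> T1 T2 tb :: real
    and J m :: nat
    and x0 :: 'a and x :: "real \<Rightarrow> 'a"
    and N :: "nat \<Rightarrow> 'a \<Rightarrow> 'a" and y :: "nat \<Rightarrow> 'a"
  assumes L1: "L1 > 0" and L2: "L2 > 0"
    and lip1: "L1-lipschitz_on UNIV f1" and lip2: "L2-lipschitz_on UNIV f2"
    and mu: "\<mu> > 0" and diff: "\<forall>z. norm (f1 z - f2 z) \<le> \<mu>"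
    and J: "J \<ge> 2" and T2: "T2 > 0"
    and eta: "\<eta> > 0"
    and m: "1 \<le> m" "m \<le> J" "tb = real (m - 1) * (T2 / real (J - 1))"
    and T1: "0 < T1" "T1 \<le> tb" "tb < T2" "\<bar>tb - T1\<bar> \<le> \<eta>"
    and sol: "switched_solution f1 f2 T1 T2 x0 x"
    and eps: "\<epsilon> \<ge> 0"
    and y1: "y 1 = x0"
    and yrec: "\<forall>j\<in>{2..J}. y j = N j (y (j - 1))"
    and acc: "\<forall>j\<in>{2..J}.
       norm (N j (y (j - 1)) -
             flow_map (if real (j - 1) * (T2 / real (J - 1)) \<le> tb then f1 else f2)
                      (T2 / real (J - 1)) (y (j - 1))) \<le> \<epsilon>"
  shows "\<forall>j\<in>{2..J}.
    (let \<Delta> = T2 / real (J - 1); t = real (j - 1) * \<Delta> in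
      (t \<in> {0<..T1} \<longrightarrow>
         norm (y j - x t) \<le> (1 - exp (L1 * t)) / (1 - exp (L1 * \<Delta>)) * \<epsilon>) \<and>
      (t \<in> {T1<..tb} \<longrightarrow>
         norm (y j - x t) \<le> \<mu> * (t - T1) * exp (max L1 L2 * (t - T1))
           + (1 - exp (L1 * t)) / (1 - exp (L1 * \<Delta>)) * \<epsilon>) \<and>
      (t \<in> {tb<..T2} \<longrightarrow>
         norm (y j - x t) \<le> \<mu> * \<eta> * exp (L2 * (t - tb) + max L1 L2 * \<eta>)
           + (1 - exp (L2 * (t - tb))) / (1 - exp (L2 * \<Delta>)) * \<epsilon>
           + exp (L2 * (t - tb)) * ((1 - exp (L1 * tb)) / (1 - exp (L1 * \<Delta>))) * \<epsilon>))"
proof -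
  define \<Delta> where "\<Delta> = T2 / real (J - 1)"
  have J1: "real (J - 1) \<ge> 1" using J by simp
  have Dpos: "\<Delta> > 0" unfolding \<Delta>_def using J1 T2 by simp
  have tJ: "real (J - 1) * \<Delta> = T2" unfolding \<Delta>_def using J1 by simp
  have tle: "real k * \<Delta> \<le> T2" if "k \<le> J - 1" for k
  proof -
    have "real k * \<Delta> \<le> real (J - 1) * \<Delta>" using that Dpos by (intro mult_right_mono) auto
    then show ?thesis using tJ by simp
  qed
  obtain m' where m': "m = Suc m'" using m(1) by (cases m) auto
  have tb: "tb = real m' * \<Delta>" using m(3) unfolding m' \<Delta>_def by simp
  define L where "L = max L1 L2"
  define S where "S = (\<lambda>(L'::real) (k::nat). (1 - exp (L' * (real k * \<Delta>))) / (1 - exp (L' * \<Delta>)) * \<epsilon>)"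
  have Srec: "S L' (Suc k) = exp (L' * \<Delta>) * S L' k + \<epsilon>" if L': "L' > 0" for L' k
  proof -
    have "L' * \<Delta> > 0" using L' Dpos by simp
    then have q: "exp (L' * \<Delta>) > 1" by simp
    have e: "exp (L' * (real (Suc k) * \<Delta>)) = exp (L' * (real k * \<Delta>)) * exp (L' * \<Delta>)"
      by (simp add: distrib_right distrib_left exp_add)
    have ne: "1 - exp (L' * \<Delta>) \<noteq> 0" using q by linarith
    show ?thesis unfolding S_def e using ne by (simp add: field_simps)
  qed
  have S0: "S L' 0 = 0" for L' unfolding S_def by simp
  have x0: "x 0 = x0" and xd1: "\<forall>t\<in>{0..T1}. (x has_vector_derivative f1 (x t)) (at t within {0..T1})"
    and xd2: "\<forall>t\<in>{T1..T2}. (x has_vector_derivative f2 (x t)) (at t within {T1..T2})"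
    using sol unfolding switched_solution_def by auto
  obtain z where z0: "z 0 = x0" and zd: "\<forall>t\<in>{0..T2}. (z has_vector_derivative f1 (z t)) (at t within {0..T2})"
    using picard_exists[OF lip1 L1, of T2 x0] T2 by auto
  have zd': "\<forall>s\<in>{a..b}. (z has_vector_derivative f1 (z s)) (at s within {a..b})"
    if "0 \<le> a" "b \<le> T2" for a b
    using zd that has_vector_derivative_within_subset[of z _ _ "{0..T2}" "{a..b}"] by auto
  have zx1: "z t = x t" if t: "t \<in> {0..T1}" for t
  proof -
    have "norm (z t - x t) \<le> exp (L1*(t-0)) * norm (z 0 - x 0)"
    proof (rule sol_stab[OF lip1 L1])
      show "0 \<le> t" using t by simp
      show "\<forall>s\<in>{0..t}. (z has_vector_derivative f1 (z s)) (at s within {0..t})"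
        using zd'[of 0 t] t T1 by auto
      show "\<forall>s\<in>{0..t}. (x has_vector_derivative f1 (x s)) (at s within {0..t})"
        using xd1 t has_vector_derivative_within_subset[of x _ _ "{0..T1}" "{0..t}"] by auto
    qed
    then show ?thesis using z0 x0 by simp
  qed
  have zx2: "norm (z t - x t) \<le> \<mu> * (t - T1) * exp (L * (t - T1))" if t: "t \<in> {T1..T2}" for t
  proof -
    have "norm ((\<lambda>s. z s - x s) t) + \<mu>/L1 \<le> (norm ((\<lambda>s. z s - x s) T1) + \<mu>/L1) * exp (L1*(t-T1))"
    proof (rule gronwall_vec[OF _ L1])
      show "T1 \<le> t" "0 \<le> \<mu>" using t mu by auto
      fix s assume s: "s \<in> {T1..t}"
      have "(z has_vector_derivative f1 (z s)) (at s within {T1..t})"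
        using zd'[of T1 t] t s T1 by auto
      moreover have "(x has_vector_derivative f2 (x s)) (at s within {T1..t})"
        using xd2 t s has_vector_derivative_within_subset[of x _ _ "{T1..T2}" "{T1..t}"] by auto
      ultimately show "((\<lambda>s. z s - x s) has_vector_derivative f1 (z s) - f2 (x s)) (at s within {T1..t})"
        by (intro derivative_intros)
      have "norm (f1 (z s) - f2 (x s)) \<le> norm (f1 (z s) - f1 (x s)) + norm (f1 (x s) - f2 (x s))"
        by (metis diff_add_cancel norm_triangle_ineq add_diff_eq)
      also have "\<dots> \<le> L1 * norm (z s - x s) + \<mu>"
        using lipschitz_on_normD[OF lip1] diff by (intro add_mono) auto
      finally show "norm (f1 (z s) - f2 (x s)) \<le> L1 * norm (z s - x s) + \<mu>" .
    qed
    moreover have "z T1 = x T1" using zx1[of T1] T1 by simp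
    ultimately have "norm (z t - x t) \<le> \<mu>/L1 * (exp (L1*(t-T1)) - 1)"
      by (simp add: algebra_simps)
    also have "\<dots> \<le> \<mu>/L1 * ((L1*(t-T1)) * exp (L1*(t-T1)))"
      using exp_minus_one_le[of "L1*(t-T1)"] t L1 mu by (intro mult_left_mono) auto
    also have "\<dots> = \<mu> * (t - T1) * exp (L1*(t-T1))" using L1 by simp
    also have "\<dots> \<le> \<mu> * (t - T1) * exp (L*(t-T1))"
      using t mu unfolding L_def by (intro mult_left_mono) (auto intro: mult_right_mono)
    finally show ?thesis .
  qed
  have PA: "\<forall>k. Suc k \<le> J \<longrightarrow> real k * \<Delta> \<le> tb \<longrightarrow> norm (y (Suc k) - z (real k * \<Delta>)) \<le> S L1 k"
  proof (intro allI)
    fix k show "Suc k \<le> J \<longrightarrow> real k * \<Delta> \<le> tb \<longrightarrow> norm (y (Suc k) - z (real k * \<Delta>)) \<le> S L1 k"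
    proof (induction k)
      case 0 then show ?case using y1 z0 S0 by simp
    next
      case (Suc k)
      show ?case
      proof (intro impI)
        assume kJ: "Suc (Suc k) \<le> J" and kt: "real (Suc k) * \<Delta> \<le> tb"
        have kt': "real k * \<Delta> \<le> tb" using kt Dpos
          by (metis of_nat_Suc le_add_same_cancel1 mult_right_mono order.trans of_nat_0_le_iff less_imp_le add.commute zero_le_one)
        have IH: "norm (y (Suc k) - z (real k * \<Delta>)) \<le> S L1 k" using Suc.IH kJ kt' by simp
        have jJ: "Suc (Suc k) \<in> {2..J}" using kJ by simp
        have yj: "y (Suc (Suc k)) = N (Suc (Suc k)) (y (Suc k))" using yrec jJ by auto
        have ac: "norm (N (Suc (Suc k)) (y (Suc k)) - flow_map f1 \<Delta> (y (Suc k))) \<le> \<epsilon>"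
        proof -
          have "norm (N (Suc (Suc k)) (y (Suc (Suc k) - 1)) - flow_map (if real (Suc (Suc k) - 1) * \<Delta> \<le> tb then f1 else f2) \<Delta> (y (Suc (Suc k) - 1))) \<le> \<epsilon>"
            using acc jJ unfolding \<Delta>_def by blast
          then show ?thesis using kt by (simp del: of_nat_Suc)
        qed
        have ss: "real (Suc k) * \<Delta> = real k * \<Delta> + \<Delta>" by (simp add: algebra_simps)
        have up: "real k * \<Delta> + \<Delta> \<le> T2" using tle[of "Suc k"] kJ ss by simp
        have fb: "norm (flow_map f1 \<Delta> (y (Suc k)) - z (real k * \<Delta> + \<Delta>)) \<le> exp (L1*\<Delta>) * norm (y (Suc k) - z (real k * \<Delta>))"
          by (rule flow_bound[OF lip1 L1 less_imp_le[OF Dpos]], rule zd') (use up Dpos in auto)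
        have "norm (y (Suc (Suc k)) - z (real (Suc k) * \<Delta>))
            \<le> norm (N (Suc (Suc k)) (y (Suc k)) - flow_map f1 \<Delta> (y (Suc k))) + norm (flow_map f1 \<Delta> (y (Suc k)) - z (real k * \<Delta> + \<Delta>))"
          unfolding yj ss by (metis diff_add_cancel norm_triangle_ineq add_diff_eq)
        also have "\<dots> \<le> \<epsilon> + exp (L1*\<Delta>) * S L1 k"
          using ac fb IH by (smt (verit) exp_gt_zero mult_left_mono)
        also have "\<dots> = S L1 (Suc k)" using Srec[OF L1] by simp
        finally show "norm (y (Suc (Suc k)) - z (real (Suc k) * \<Delta>)) \<le> S L1 (Suc k)" .
      qed
    qed
  qed
  define E0 where "E0 = \<mu> * \<eta> * exp (L * \<eta>) + S L1 m'"
  have PB: "\<forall>i. m + i \<le> J \<longrightarrow> norm (y (m+i) - x (real (m'+i) * \<Delta>)) \<le> exp (L2 * (real i * \<Delta>)) * E0 + S L2 i"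
  proof (intro allI)
    fix i show "m + i \<le> J \<longrightarrow> norm (y (m+i) - x (real (m'+i) * \<Delta>)) \<le> exp (L2 * (real i * \<Delta>)) * E0 + S L2 i"
    proof (induction i)
      case 0
      have a: "norm (y m - z tb) \<le> S L1 m'" using PA m(2) unfolding m' tb by auto
      have tbI: "tb \<in> {T1..T2}" using T1 by auto
      have "norm (z tb - x tb) \<le> \<mu> * (tb - T1) * exp (L * (tb - T1))" by (rule zx2[OF tbI])
      also have "\<dots> \<le> \<mu> * \<eta> * exp (L * \<eta>)"
      proof -
        have h: "tb - T1 \<le> \<eta>" "0 \<le> tb - T1" using T1 by auto
        have Lp: "L > 0" unfolding L_def using L1 by simp
        have "exp (L * (tb - T1)) \<le> exp (L * \<eta>)" using h Lp by simp
        then show ?thesis using h mu eta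
          by (intro mult_mono) (auto intro: mult_left_mono)
      qed
      finally have b: "norm (z tb - x tb) \<le> \<mu> * \<eta> * exp (L * \<eta>)" .
      have "norm (y m - x tb) \<le> norm (y m - z tb) + norm (z tb - x tb)"
        by (metis diff_add_cancel norm_triangle_ineq add_diff_eq)
      then show ?case using a b unfolding E0_def tb S0 by simp
    next
      case (Suc i)
      show ?case
      proof
        assume iJ: "m + Suc i \<le> J"
        have IH: "norm (y (m+i) - x (real (m'+i) * \<Delta>)) \<le> exp (L2 * (real i * \<Delta>)) * E0 + S L2 i"
          using Suc.IH iJ by simp
        have jJ: "Suc (m + i) \<in> {2..J}" using iJ m' by simp
        have yj: "y (Suc (m+i)) = N (Suc (m+i)) (y (m+i))" using yrec jJ by auto
        have gt: "\<not> real (m + i) * \<Delta> \<le> tb"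
        proof -
          have "real m' * \<Delta> < real (m' + Suc i) * \<Delta>" using Dpos by simp
          then show ?thesis unfolding tb m' by simp
        qed
        have ac: "norm (N (Suc (m+i)) (y (m+i)) - flow_map f2 \<Delta> (y (m+i))) \<le> \<epsilon>"
        proof -
          have "norm (N (Suc (m+i)) (y (Suc (m+i) - 1)) - flow_map (if real (Suc (m+i) - 1) * \<Delta> \<le> tb then f1 else f2) \<Delta> (y (Suc (m+i) - 1))) \<le> \<epsilon>"
            using acc jJ unfolding \<Delta>_def by blast
          then show ?thesis using gt by (simp del: of_nat_Suc of_nat_add)
        qed
        have ss: "real (m' + Suc i) * \<Delta> = real (m'+i) * \<Delta> + \<Delta>" by (simp add: algebra_simps)
        have up: "real (m'+i) * \<Delta> + \<Delta> \<le> T2" using tle[of "m' + Suc i"] iJ ss m' by simp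
        have lo: "T1 \<le> real (m'+i) * \<Delta>"
        proof -
          have "real m' * \<Delta> \<le> real (m'+i) * \<Delta>" using Dpos by (intro mult_right_mono) auto
          then show ?thesis using T1 tb by simp
        qed
        have xd: "\<forall>s\<in>{real (m'+i) * \<Delta>..real (m'+i) * \<Delta> + \<Delta>}. (x has_vector_derivative f2 (x s)) (at s within {real (m'+i) * \<Delta>..real (m'+i) * \<Delta> + \<Delta>})"
          using xd2 up lo has_vector_derivative_within_subset[of x _ _ "{T1..T2}" "{real (m'+i) * \<Delta>..real (m'+i) * \<Delta> + \<Delta>}"]
          by auto
        have fb: "norm (flow_map f2 \<Delta> (y (m+i)) - x (real (m'+i) * \<Delta> + \<Delta>)) \<le> exp (L2*\<Delta>) * norm (y (m+i) - x (real (m'+i) * \<Delta>))"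
          by (rule flow_bound[OF lip2 L2 less_imp_le[OF Dpos] xd])
        have "norm (y (m + Suc i) - x (real (m' + Suc i) * \<Delta>))
            \<le> norm (N (Suc (m+i)) (y (m+i)) - flow_map f2 \<Delta> (y (m+i))) + norm (flow_map f2 \<Delta> (y (m+i)) - x (real (m'+i) * \<Delta> + \<Delta>))"
          unfolding ss using yj by (metis add_Suc_right diff_add_cancel norm_triangle_ineq add_diff_eq)
        also have "\<dots> \<le> \<epsilon> + exp (L2*\<Delta>) * (exp (L2 * (real i * \<Delta>)) * E0 + S L2 i)"
          using ac fb IH by (smt (verit) exp_gt_zero mult_left_mono)
        also have "\<dots> = exp (L2 * (real (Suc i) * \<Delta>)) * E0 + S L2 (Suc i)"
        proof -
          have "exp (L2 * (real (Suc i) * \<Delta>)) = exp (L2*\<Delta>) * exp (L2 * (real i * \<Delta>))"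
            by (simp add: distrib_right distrib_left exp_add)
          then show ?thesis using Srec[OF L2, of i] by (simp add: algebra_simps)
        qed
        finally show "norm (y (m + Suc i) - x (real (m' + Suc i) * \<Delta>)) \<le> exp (L2 * (real (Suc i) * \<Delta>)) * E0 + S L2 (Suc i)" .
      qed
    qed
  qed
  show ?thesis
    unfolding Let_def \<Delta>_def[symmetric]
  proof (intro ballI conjI impI)
    fix j assume j: "j \<in> {2..J}"
    then obtain k where k: "j = Suc k" "1 \<le> k" by (cases j) auto
    have kJ: "Suc k \<le> J" using j k by simp
    have jk: "real (j - 1) * \<Delta> = real k * \<Delta>" using k by simp
    {
      assume t: "real (j - 1) * \<Delta> \<in> {0<..T1}"
      then have t': "real k * \<Delta> \<in> {0<..T1}" unfolding jk .
      then have "real k * \<Delta> \<le> tb" "real k * \<Delta> \<in> {0..T1}" using T1 by auto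
      then show "norm (y j - x (real (j - 1) * \<Delta>)) \<le> (1 - exp (L1 * (real (j - 1) * \<Delta>))) / (1 - exp (L1 * \<Delta>)) * \<epsilon>"
        using PA kJ zx1 unfolding jk k(1) S_def by auto
    }
    {
      assume t: "real (j - 1) * \<Delta> \<in> {T1<..tb}"
      then have t': "real k * \<Delta> \<in> {T1<..tb}" unfolding jk .
      then have a: "norm (y j - z (real k * \<Delta>)) \<le> S L1 k" using PA kJ k by auto
      have "real k * \<Delta> \<in> {T1..T2}" using t' T1 by auto
      from zx2[OF this] have b: "norm (z (real k * \<Delta>) - x (real k * \<Delta>)) \<le> \<mu> * (real k * \<Delta> - T1) * exp (L * (real k * \<Delta> - T1))" .
      have "norm (y j - x (real k * \<Delta>)) \<le> norm (y j - z (real k * \<Delta>)) + norm (z (real k * \<Delta>) - x (real k * \<Delta>))"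
        by (metis diff_add_cancel norm_triangle_ineq add_diff_eq)
      then show "norm (y j - x (real (j - 1) * \<Delta>)) \<le> \<mu> * (real (j - 1) * \<Delta> - T1) * exp (max L1 L2 * (real (j - 1) * \<Delta> - T1)) + (1 - exp (L1 * (real (j - 1) * \<Delta>))) / (1 - exp (L1 * \<Delta>)) * \<epsilon>"
        using a b unfolding jk S_def L_def by simp
    }
    {
      assume t: "real (j - 1) * \<Delta> \<in> {tb<..T2}"
      then have t': "real k * \<Delta> \<in> {tb<..T2}" unfolding jk .
      then have "real m' * \<Delta> < real k * \<Delta>" using tb by simp
      then have km: "m' < k" using Dpos by simp
      define i where "i = k - m'"
      have ki: "k = m' + i" "j = m + i" using km k m' unfolding i_def by auto
      have B: "norm (y (m+i) - x (real (m'+i) * \<Delta>)) \<le> exp (L2 * (real i * \<Delta>)) * E0 + S L2 i"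
        using PB kJ ki m' by auto
      have ti: "real (j - 1) * \<Delta> - tb = real i * \<Delta>" using jk ki tb by (simp add: algebra_simps)
      have "exp (L2 * (real i * \<Delta>)) * E0 = \<mu> * \<eta> * exp (L2 * (real i * \<Delta>) + L * \<eta>)
           + exp (L2 * (real i * \<Delta>)) * ((1 - exp (L1 * tb)) / (1 - exp (L1 * \<Delta>))) * \<epsilon>"
        unfolding E0_def S_def tb by (simp add: exp_add algebra_simps)
      moreover have B': "norm (y j - x (real (j - 1) * \<Delta>)) \<le> exp (L2 * (real i * \<Delta>)) * E0 + S L2 i"
      proof -
        have "j - 1 = m' + i" using ki m' by simp
        then have e: "x (real (j - 1) * \<Delta>) = x (real (m'+i) * \<Delta>)" by simp
        show ?thesis unfolding e using B ki(2) by simp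
      qed
      ultimately show "norm (y j - x (real (j - 1) * \<Delta>)) \<le> \<mu> * \<eta> * exp (L2 * (real (j - 1) * \<Delta> - tb) + max L1 L2 * \<eta>) +
           (1 - exp (L2 * (real (j - 1) * \<Delta> - tb))) / (1 - exp (L2 * \<Delta>)) * \<epsilon> +
           exp (L2 * (real (j - 1) * \<Delta> - tb)) * ((1 - exp (L1 * tb)) / (1 - exp (L1 * \<Delta>))) * \<epsilon>"
        unfolding ti S_def L_def by linarith
    }
  qed
qed


end
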